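(* Let $n$ be an even positive integer, let $V_0=\{v\in\{-1,1\}^n : v_1=1,\ \sum_i v_i=0\}$, let $P(V_0)=\{\sum_{v\in W}v : W\subseteq V_0\}$, and let $g(V_0)=\frac12\sum_{v\in V_0}v$. (1) If $n$ is not a power of $2$, then $g(V_0)\in P(V_0)$. (2) If $n$ is a power of $2$ and $n>2$, let $w\in\mathbb{Z}^n$ be given by $w_i=1$ if $i\not\equiv 0\pmod 4$ and $w_i=-3$ if $i\equiv 0\pmod 4$. Then $g(V_0)-\frac12 w\in P(V_0)$. *)

theory Defs
  imports Complex_Main
begin

text \<open>Vectors in R^n are represented as functions nat => real indexed by 1..n,
  equal to 0 outside {1..n}.\<close>

definition V0 :: "nat \<Rightarrow> (nat \<Rightarrow> real) set" where
  "V0 n = {v. (\<forall>i\<in>{1..n}. v i = 1 \<or> v i = -1) \<and> (\<forall>i. i \<notin> {1..n} \<longrightarrow> v i = 0)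
              \<and> v 1 = 1 \<and> (\<Sum>i=1..n. v i) = 0}"

definition PV0 :: "nat \<Rightarrow> (nat \<Rightarrow> real) set" where
  "PV0 n = {x. \<exists>W \<subseteq> V0 n. x = (\<lambda>i. \<Sum>v\<in>W. v i)}"

definition gV0 :: "nat \<Rightarrow> (nat \<Rightarrow> real)" where
  "gV0 n = (\<lambda>i. (1/2) * (\<Sum>v\<in>V0 n. v i))"

definition wvec :: "nat \<Rightarrow> (nat \<Rightarrow> real)" where
  "wvec n = (\<lambda>i. if i \<in> {1..n} then (if i mod 4 = 0 then -3 else 1) else 0)"

end

theory Submission
  imports Defs
begin


definition Bn :: "nat \<Rightarrow> (nat \<Rightarrow> real) set" where
  "Bn n = {v. (\<forall>i\<in>{1..n}. v i = 1 \<or> v i = -1) \<and> (\<forall>i. i \<notin> {1..n} \<longrightarrow> v i = 0) \<and> (\<Sum>i=1..n. v i) = 0}"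

definition neg :: "(nat \<Rightarrow> real) \<Rightarrow> (nat \<Rightarrow> real)" where "neg v = (\<lambda>i. - v i)"

definition good :: "nat \<Rightarrow> (nat \<Rightarrow> real) \<Rightarrow> bool" where
  "good n S \<longleftrightarrow> (\<exists>s. (\<forall>v\<in>Bn n. (s v = 1 \<or> s v = -1) \<and> s (neg v) = - s v)
      \<and> (\<forall>i. (\<Sum>v\<in>Bn n. s v * v i) = S i))"

lemma finite_Bn: "finite (Bn n)"
proof -
  have "Bn n \<subseteq> {f. \<forall>x. (x \<in> {1..n} \<longrightarrow> f x \<in> {1,-1}) \<and> (x \<notin> {1..n} \<longrightarrow> f x = 0)}"
    unfolding Bn_def by auto
  then show ?thesis by (rule finite_subset) (rule finite_set_of_finite_funs, auto)
qed

lemma neg_neg[simp]: "neg (neg v) = v" by (simp add: neg_def)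

lemma neg_Bn: "v \<in> Bn n \<Longrightarrow> neg v \<in> Bn n"
  unfolding Bn_def neg_def by (auto simp: sum_negf)

lemma Bn_val: "v \<in> Bn n \<Longrightarrow> i \<in> {1..n} \<Longrightarrow> v i = 1 \<or> v i = -1"
  unfolding Bn_def by auto
lemma Bn_out: "v \<in> Bn n \<Longrightarrow> i \<notin> {1..n} \<Longrightarrow> v i = 0"
  unfolding Bn_def by auto
lemma Bn_sum: "v \<in> Bn n \<Longrightarrow> (\<Sum>i=1..n. v i) = 0"
  unfolding Bn_def by auto

lemma sum_involution_zero:
  fixes f :: "'a \<Rightarrow> real"
  assumes "\<And>x. x\<in>A \<Longrightarrow> g x \<in> A" "\<And>x. x\<in>A \<Longrightarrow> g (g x) = x" "\<And>x. x\<in>A \<Longrightarrow> f (g x) = - f x"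
  shows "sum f A = 0"
proof -
  have "sum f A = sum (\<lambda>x. f (g x)) A"
    by (rule sum.reindex_bij_witness[where i=g and j=g]) (auto simp: assms)
  also have "\<dots> = - sum f A" using assms(3) by (simp add: sum_negf)
  finally show ?thesis by simp
qed

lemma sum_double: fixes f :: "nat \<Rightarrow> 'a::comm_monoid_add" shows "(\<Sum>i=1..2*m. f i) = (\<Sum>i=1..m. f i) + (\<Sum>i=1..m. f (i+m))"
proof -
  have "(\<Sum>i=1..m + m. f i) = (\<Sum>i=1..m. f i) + (\<Sum>i=m+1..m+m. f i)"
    by (rule sum.ub_add_nat[where m=1 and n=m and p=m]) simp
  also have "(\<Sum>i=m+1..m+m. f i) = (\<Sum>i=1..m. f (i+m))"
    using sum.shift_bounds_cl_nat_ivl[of f 1 m m] by (simp add: add.commute)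
  finally show ?thesis by (simp add: mult_2)
qed

lemma odd_sum_pm:
  fixes k :: nat and v :: "nat \<Rightarrow> real"
  assumes "\<forall>i\<in>{1..k}. v i = 1 \<or> v i = (-1::real)"
  shows "\<exists>z::int. (\<Sum>i=1..k. v i) = of_int z \<and> (odd z \<longleftrightarrow> odd k)"
  using assms
proof (induction k)
  case 0 then show ?case by (intro exI[of _ 0]) simp
next
  case (Suc k)
  then obtain z where z: "(\<Sum>i=1..k. v i) = of_int z" "odd z \<longleftrightarrow> odd k" by auto
  have e: "(\<Sum>i=1..Suc k. v i) = (\<Sum>i=1..k. v i) + v (Suc k)" by simp
  have "v (Suc k) = 1 \<or> v (Suc k) = -1" using Suc.prems by auto
  then show ?case
  proof
    assume h: "v (Suc k) = 1"
    show ?thesis by (intro exI[of _ "z+1"]) (simp only: e z h, simp add: z)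
  next
    assume h: "v (Suc k) = -1"
    show ?thesis by (intro exI[of _ "z-1"]) (simp only: e z h, simp add: z)
  qed
qed

lemma Bn_odd_empty: "odd m \<Longrightarrow> Bn m = {}"
proof (rule ccontr)
  assume "odd m" "Bn m \<noteq> {}"
  then obtain v where v: "v \<in> Bn m" by auto
  then obtain z :: int where "(\<Sum>i=1..m. v i) = of_int z" "odd z \<longleftrightarrow> odd m"
    using odd_sum_pm[of m v] Bn_val by blast
  with Bn_sum[OF v] \<open>odd m\<close> show False by simp
qed

lemma good_odd: "odd m \<Longrightarrow> good m (\<lambda>_. 0)"
  unfolding good_def by (simp add: Bn_odd_empty)



lemma V0_eq: "V0 n = {v\<in>Bn n. v 1 = 1}"
  unfolding V0_def Bn_def by auto

lemma good_PV0:
  assumes g: "good n S" and n: "n > 0"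
  shows "(\<lambda>i. gV0 n i + S i / 4) \<in> PV0 n"
proof -
  obtain s where s1: "\<And>v. v\<in>Bn n \<Longrightarrow> (s v = 1 \<or> s v = -1) \<and> s (neg v) = - s v"
    and s2: "\<And>i. (\<Sum>v\<in>Bn n. s v * v i) = S i"
    using g unfolding good_def by blast
  define A where "A = V0 n"
  define N where "N = {v\<in>Bn n. v 1 = -1}"
  define W where "W = {v\<in>A. s v = 1}"
  have fA: "finite A" unfolding A_def V0_eq using finite_Bn by auto
  have fN: "finite N" unfolding N_def using finite_Bn by auto
  have BAN: "Bn n = A \<union> N" unfolding A_def V0_eq N_def using Bn_val[of _ n 1] n by auto
  have dAN: "A \<inter> N = {}" unfolding A_def V0_eq N_def by auto
  have WA: "W \<subseteq> A" unfolding W_def by auto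
  have key: "(\<Sum>v\<in>W. v i) = gV0 n i + S i / 4" for i
  proof -
    have "(\<Sum>v\<in>N. s v * v i) = (\<Sum>v\<in>A. s (neg v) * neg v i)"
      by (rule sum.reindex_bij_witness[where i=neg and j=neg])
        (auto simp: N_def A_def V0_eq neg_Bn, auto simp: neg_def)
    also have "\<dots> = (\<Sum>v\<in>A. s v * v i)"
    proof (rule sum.cong)
      fix x assume "x \<in> A"
      then have "s (neg x) = - s x" using s1 by (auto simp: A_def V0_eq)
      then show "s (neg x) * neg x i = s x * x i" by (simp add: neg_def)
    qed simp
    finally have hN: "(\<Sum>v\<in>N. s v * v i) = (\<Sum>v\<in>A. s v * v i)" .
    have "S i = (\<Sum>v\<in>A. s v * v i) + (\<Sum>v\<in>N. s v * v i)"
      unfolding s2[symmetric] BAN by (rule sum.union_disjoint[OF fA fN dAN])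
    with hN have hS: "S i = 2 * (\<Sum>v\<in>A. s v * v i)" by simp
    have AW: "A = W \<union> (A - W)" "W \<inter> (A - W) = {}" using WA by auto
    have fW: "finite W" "finite (A - W)" using fA WA finite_subset by auto
    have "(\<Sum>v\<in>A. s v * v i) = (\<Sum>v\<in>W. s v * v i) + (\<Sum>v\<in>A-W. s v * v i)"
      by (subst AW(1), rule sum.union_disjoint[OF fW AW(2)])
    also have "(\<Sum>v\<in>W. s v * v i) = (\<Sum>v\<in>W. v i)"
      by (rule sum.cong) (auto simp: W_def)
    also have "(\<Sum>v\<in>A-W. s v * v i) = (\<Sum>v\<in>A-W. - v i)"
    proof (rule sum.cong)
      fix x assume "x \<in> A - W"
      then have "s x = -1" using s1[of x] by (auto simp: W_def A_def V0_eq)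
      then show "s x * x i = - x i" by simp
    qed simp
    finally have h1: "(\<Sum>v\<in>A. s v * v i) = (\<Sum>v\<in>W. v i) - (\<Sum>v\<in>A-W. v i)"
      by (simp add: sum_negf)
    have h2: "(\<Sum>v\<in>A. v i) = (\<Sum>v\<in>W. v i) + (\<Sum>v\<in>A-W. v i)"
      by (subst AW(1), rule sum.union_disjoint[OF fW AW(2)])
    have "gV0 n i = (1/2) * (\<Sum>v\<in>A. v i)" unfolding gV0_def A_def by simp
    with h1 h2 hS show ?thesis by (simp add: field_simps)
  qed
  have "(\<lambda>i. gV0 n i + S i / 4) = (\<lambda>i. \<Sum>v\<in>W. v i)" using key by simp
  then show ?thesis unfolding PV0_def using WA A_def by blast
qed

definition mk4 :: "real \<times> real \<times> real \<times> real \<Rightarrow> (nat \<Rightarrow> real)" where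
  "mk4 t = (case t of (a,b,c,d) \<Rightarrow> (\<lambda>i. if i = 1 then a else if i = 2 then b else if i = 3 then c else if i = 4 then d else 0))"

lemma sum4: fixes f :: "nat \<Rightarrow> real" shows "(\<Sum>i=1..4. f i) = f 1 + f 2 + f 3 + (f 4 :: real)"
  by (simp add: eval_nat_numeral)

lemma Bn4: "Bn 4 = mk4 ` {(1,1,-1,-1),(1,-1,1,-1),(1,-1,-1,1),(-1,1,1,-1),(-1,1,-1,1),(-1,-1,1,1)}"
  (is "_ = mk4 ` ?T")
proof
  show "Bn 4 \<subseteq> mk4 ` ?T"
  proof
    fix v assume v: "v \<in> Bn 4"
    have vv: "v = mk4 (v 1, v 2, v 3, v 4)"
    proof
      fix i show "v i = mk4 (v 1, v 2, v 3, v 4) i"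
        using Bn_out[OF v, of i] by (auto simp: mk4_def)
    qed
    have "v 1 = 1 \<or> v 1 = -1" "v 2 = 1 \<or> v 2 = -1" "v 3 = 1 \<or> v 3 = -1" "v 4 = 1 \<or> v 4 = -1"
      using Bn_val[OF v] by auto
    moreover have "v 1 + v 2 + v 3 + v 4 = 0" using Bn_sum[OF v] sum4[of v] by simp
    ultimately have "(v 1, v 2, v 3, v 4) \<in> ?T" by auto
    then show "v \<in> mk4 ` ?T" by (subst vv) blast
  qed
next
  show "mk4 ` ?T \<subseteq> Bn 4"
    unfolding Bn_def sum4 by (auto simp: mk4_def)
qed

lemma good4: "good 4 (\<lambda>i. -2 * wvec 4 i)"
proof -
  let ?T = "{(1,1,-1,-1),(1,-1,1,-1),(1,-1,-1,1),(-1,1,1,-1),(-1,1,-1,1),(-1,-1,1,1)} :: (real\<times>real\<times>real\<times>real) set"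
  have inj: "inj_on mk4 ?T"
  proof (rule inj_onI)
    fix x y assume "x \<in> ?T" "y \<in> ?T" "mk4 x = mk4 y"
    then have "mk4 x 1 = mk4 y 1" "mk4 x 2 = mk4 y 2" "mk4 x 3 = mk4 y 3" "mk4 x 4 = mk4 y 4" by auto
    then show "x = y" by (cases x; cases y) (auto simp: mk4_def)
  qed
  have "(\<Sum>v\<in>Bn 4. v 4 * v i) = -2 * wvec 4 i" for i
  proof -
    have "(\<Sum>v\<in>Bn 4. v 4 * v i) = (\<Sum>t\<in>?T. mk4 t 4 * mk4 t i)"
      unfolding Bn4 by (subst sum.reindex[OF inj]) simp
    also have "\<dots> = -2 * wvec 4 i"
      by (simp add: mk4_def wvec_def)
    finally show ?thesis .
  qed
  moreover have "\<forall>v\<in>Bn 4. (v 4 = 1 \<or> v 4 = -1) \<and> neg v 4 = - v 4"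
    using Bn_val by (auto simp: neg_def)
  ultimately show ?thesis unfolding good_def by (intro exI[of _ "\<lambda>v. v 4"]) auto
qed



definition mixed :: "nat \<Rightarrow> (nat \<Rightarrow> real) \<Rightarrow> nat set" where
  "mixed m v = {b\<in>{1..m}. v b \<noteq> v (b+m)}"
definition flip :: "nat \<Rightarrow> nat \<Rightarrow> (nat \<Rightarrow> real) \<Rightarrow> (nat \<Rightarrow> real)" where
  "flip m b v = (\<lambda>j. if j = b \<or> j = b + m then - v j else v j)"
definition fb1 :: "nat set \<Rightarrow> nat" where "fb1 M = Min M"
definition fb2 :: "nat set \<Rightarrow> nat" where "fb2 M = Min (M - {Min M})"
definition fj :: "nat \<Rightarrow> nat set \<Rightarrow> nat" where "fj m M = Min ({1..m} - {fb1 M, fb2 M})"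

lemma mixed_sub: "mixed m v \<subseteq> {1..m}" unfolding mixed_def by auto
lemma finite_mixed[simp]: "finite (mixed m v)" using mixed_sub finite_subset by blast
lemma mixed_neg: "mixed m (neg v) = mixed m v" unfolding mixed_def neg_def by auto

lemma Bn_lo: "v \<in> Bn (2*m) \<Longrightarrow> b \<in> {1..m} \<Longrightarrow> v b = 1 \<or> v b = -1"
  using Bn_val[of v "2*m" b] by auto
lemma Bn_hi: "v \<in> Bn (2*m) \<Longrightarrow> b \<in> {1..m} \<Longrightarrow> v (b+m) = 1 \<or> v (b+m) = -1"
  using Bn_val[of v "2*m" "b+m"] by auto
lemma mixed_val: "v \<in> Bn (2*m) \<Longrightarrow> b \<in> mixed m v \<Longrightarrow> v (b+m) = - v b"
  using Bn_lo[of v m b] Bn_hi[of v m b] unfolding mixed_def by auto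
lemma pure_val: "b \<in> {1..m} \<Longrightarrow> b \<notin> mixed m v \<Longrightarrow> v (b+m) = v b"
  unfolding mixed_def by auto

lemma fb_props:
  assumes "2 \<le> card M" "M \<subseteq> {1..m}" "3 \<le> m"
  shows "fb1 M \<in> M" "fb2 M \<in> M" "fb1 M \<noteq> fb2 M" "fj m M \<in> {1..m}"
    "fj m M \<noteq> fb1 M" "fj m M \<noteq> fb2 M"
proof -
  have fM: "finite M" using assms(2) finite_subset by blast
  have ne: "M \<noteq> {}" using assms(1) by auto
  show 1: "fb1 M \<in> M" unfolding fb1_def using Min_in[OF fM ne] .
  have "M - {Min M} \<noteq> {}"
  proof
    assume "M - {Min M} = {}"
    then have "M \<subseteq> {Min M}" by auto
    then have "card M \<le> card {Min M}" by (rule card_mono[rotated]) simp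
    then have "card M \<le> 1" by simp
    with assms(1) show False by simp
  qed
  then have "fb2 M \<in> M - {Min M}" unfolding fb2_def by (intro Min_in) (use fM in auto)
  then show "fb2 M \<in> M" "fb1 M \<noteq> fb2 M" unfolding fb1_def by auto
  then have "{fb1 M, fb2 M} \<subseteq> {1..m}" using 1 assms(2) by auto
  have "card {fb1 M, fb2 M} \<le> 2" by (simp add: card_insert_le_m1)
  have "{1..m} - {fb1 M, fb2 M} \<noteq> {}"
  proof
    assume "{1..m} - {fb1 M, fb2 M} = {}"
    then have "{1..m} \<subseteq> {fb1 M, fb2 M}" by auto
    then have "card {1..m} \<le> card {fb1 M, fb2 M}" by (rule card_mono[rotated]) simp
    with \<open>card {fb1 M, fb2 M} \<le> 2\<close> assms(3) show False by simp
  qed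
  then have "fj m M \<in> {1..m} - {fb1 M, fb2 M}" unfolding fj_def by (intro Min_in) auto
  then show "fj m M \<in> {1..m}" "fj m M \<noteq> fb1 M" "fj m M \<noteq> fb2 M" by auto
qed

lemma Min_minus_in:
  assumes "2 \<le> card M" "finite M"
  shows "Min (M - {c}) \<in> {fb1 M, fb2 M}" "Min (M - {c}) \<in> M" "Min (M - {c}) \<noteq> c"
proof -
  have ne: "M - {c} \<noteq> {}"
  proof
    assume "M - {c} = {}"
    then have "M \<subseteq> {c}" by auto
    then have "card M \<le> card {c}" by (rule card_mono[rotated]) simp
    then have "card M \<le> 1" by simp
    with assms(1) show False by simp
  qed
  then have i: "Min (M - {c}) \<in> M - {c}" using assms(2) by (intro Min_in) auto
  then show "Min (M - {c}) \<in> M" "Min (M - {c}) \<noteq> c" by auto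
  show "Min (M - {c}) \<in> {fb1 M, fb2 M}"
  proof (cases "c = Min M")
    case True then show ?thesis unfolding fb2_def by simp
  next
    case False
    have "M \<noteq> {}" using ne by auto
    then have "Min M \<in> M - {c}" using False Min_in[OF assms(2)] by auto
    then have "Min (M - {c}) = Min M"
      using assms(2) by (intro Min_eqI) auto
    then show ?thesis unfolding fb1_def by simp
  qed
qed

lemma mixed_flip: "b \<in> {1..m} \<Longrightarrow> mixed m (flip m b v) = mixed m v"
  unfolding mixed_def flip_def by auto

lemma flip_flip: "flip m b (flip m b v) = v"
  unfolding flip_def by auto

lemma sum_flip:
  assumes "b \<in> {1..m}"
  shows "(\<Sum>j=1..2*m. flip m b v j) = (\<Sum>j=1..2*m. v j) - 2 * v b - 2 * v (b+m)"
proof -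
  have e: "flip m b v = (\<lambda>j. v j + (if j = b then - 2 * v j else 0) + (if j = b + m then - 2 * v j else 0))"
    unfolding flip_def using assms by auto
  have "b \<in> {1..2*m}" "b + m \<in> {1..2*m}" using assms by auto
  then show ?thesis unfolding e by (simp add: sum.distrib sum.delta)
qed

lemma flip_Bn:
  assumes v: "v \<in> Bn (2*m)" and b: "b \<in> mixed m v"
  shows "flip m b v \<in> Bn (2*m)"
proof -
  have b1: "b \<in> {1..m}" using b mixed_sub[of m v] by blast
  have "(\<Sum>j=1..2*m. flip m b v j) = 0"
    using sum_flip[OF b1, of v] Bn_sum[OF v] mixed_val[OF v b] by simp
  moreover have "\<forall>i\<in>{1..2*m}. flip m b v i = 1 \<or> flip m b v i = -1"
  proof
    fix i assume "i \<in> {1..2*m}"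
    then have "v i = 1 \<or> v i = -1" by (rule Bn_val[OF v])
    then show "flip m b v i = 1 \<or> flip m b v i = -1" unfolding flip_def by auto
  qed
  moreover have "\<forall>i. i \<notin> {1..2*m} \<longrightarrow> flip m b v i = 0"
    using Bn_out[OF v] b1 unfolding flip_def by auto
  ultimately show ?thesis unfolding Bn_def by auto
qed



definition nxt :: "nat \<Rightarrow> nat \<Rightarrow> nat" where "nxt m b = (if b = m then 1 else Suc b)"
definition prv :: "nat \<Rightarrow> nat \<Rightarrow> nat" where "prv m b = (if b = 1 then m else b - 1)"
definition up :: "nat \<Rightarrow> (nat \<Rightarrow> real) \<Rightarrow> (nat \<Rightarrow> real)" where "up m v = (\<lambda>i. if i \<le> m then v i else 0)"
definition dbl :: "nat \<Rightarrow> (nat \<Rightarrow> real) \<Rightarrow> (nat \<Rightarrow> real)" where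
  "dbl m y = (\<lambda>i. if i \<le> m then y i else if i \<le> 2*m then y (i - m) else 0)"

definition sig :: "nat \<Rightarrow> ((nat \<Rightarrow> real) \<Rightarrow> real) \<Rightarrow> (nat \<Rightarrow> real) \<Rightarrow> real" where
  "sig m s v = (if 2 \<le> card (mixed m v) then v (fb1 (mixed m v)) * v (fb2 (mixed m v)) * v (fj m (mixed m v))
     else if card (mixed m v) = 1 then v (nxt m (the_elem (mixed m v))) else s (up m v))"

lemma flip_lo: "x \<in> {1..m} \<Longrightarrow> b \<in> {1..m} \<Longrightarrow> flip m b v x = (if x = b then - v x else v x)"
  unfolding flip_def by auto

lemma sig_flip:
  assumes m3: "3 \<le> m" and v: "v \<in> Bn (2*m)" and c2: "2 \<le> card (mixed m v)"
    and b: "b \<in> {fb1 (mixed m v), fb2 (mixed m v)}"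
  shows "sig m s (flip m b v) = - sig m s v"
proof -
  let ?M = "mixed m v"
  note fp = fb_props[OF c2 mixed_sub m3]
  have bM: "b \<in> ?M" using b fp by auto
  have b1: "b \<in> {1..m}" using bM mixed_sub[of m v] by blast
  have mf: "mixed m (flip m b v) = ?M" by (rule mixed_flip[OF b1])
  have i1: "fb1 ?M \<in> {1..m}" "fb2 ?M \<in> {1..m}" using fp mixed_sub[of m v] by blast+
  have "sig m s (flip m b v) = flip m b v (fb1 ?M) * flip m b v (fb2 ?M) * flip m b v (fj m ?M)"
    unfolding sig_def mf using c2 by simp
  also have "\<dots> = - (v (fb1 ?M) * v (fb2 ?M) * v (fj m ?M))"
    using b fp i1 b1 by (auto simp: flip_lo)
  also have "\<dots> = - sig m s v" unfolding sig_def using c2 by simp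
  finally show ?thesis .
qed

lemma R2_zero:
  assumes m3: "3 \<le> m"
  shows "(\<Sum>v\<in>{v\<in>Bn (2*m). 2 \<le> card (mixed m v)}. sig m s v * v i) = 0"
proof (cases "i \<in> {1..2*m}")
  case False
  then show ?thesis by (intro sum.neutral) (auto simp: Bn_out)
next
  case True
  define c where "c = (if i \<le> m then i else i - m)"
  have ci: "c \<in> {1..m}" "i = c \<or> i = c + m" using True m3 unfolding c_def by auto
  let ?R = "{v\<in>Bn (2*m). 2 \<le> card (mixed m v)}"
  define g where "g v = flip m (Min (mixed m v - {c})) v" for v
  show ?thesis
  proof (rule sum_involution_zero[where g=g])
    fix v assume "v \<in> ?R"
    then have v: "v \<in> Bn (2*m)" and c2: "2 \<le> card (mixed m v)" by auto
    note mm = Min_minus_in[OF c2 finite_mixed, of c]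
    have b1: "Min (mixed m v - {c}) \<in> {1..m}" using mm mixed_sub[of m v] by blast
    have mg: "mixed m (g v) = mixed m v" unfolding g_def by (rule mixed_flip[OF b1])
    show "g v \<in> ?R" using flip_Bn[OF v mm(2)] c2 mg unfolding g_def by auto
    show "g (g v) = v" using mg unfolding g_def by (simp add: flip_flip)
    have "sig m s (g v) = - sig m s v" unfolding g_def by (rule sig_flip[OF m3 v c2 mm(1)])
    moreover have "g v i = v i" unfolding g_def flip_def using ci mm(3) b1 by auto
    ultimately show "sig m s (g v) * g v i = - (sig m s v * v i)" by simp
  qed
qed



definition rot :: "nat \<Rightarrow> (nat \<Rightarrow> real) \<Rightarrow> (nat \<Rightarrow> real)" where
  "rot m v = (\<lambda>j. if 1 \<le> j \<and> j \<le> m then v (prv m j) else if m < j \<and> j \<le> 2*m then v (prv m (j - m) + m) else 0)"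
definition irot :: "nat \<Rightarrow> (nat \<Rightarrow> real) \<Rightarrow> (nat \<Rightarrow> real)" where
  "irot m v = (\<lambda>j. if 1 \<le> j \<and> j \<le> m then v (nxt m j) else if m < j \<and> j \<le> 2*m then v (nxt m (j - m) + m) else 0)"
definition tau :: "nat \<Rightarrow> (nat \<Rightarrow> real) \<Rightarrow> (nat \<Rightarrow> real)" where
  "tau m v = (\<lambda>j. if 1 \<le> j \<and> j \<le> m then v (j + m) else if m < j \<and> j \<le> 2*m then v (j - m) else 0)"

lemma nxt_in: "b \<in> {1..m} \<Longrightarrow> nxt m b \<in> {1..m}" unfolding nxt_def by auto
lemma prv_in: "b \<in> {1..m} \<Longrightarrow> prv m b \<in> {1..m}" unfolding prv_def by auto
lemma prv_nxt: "b \<in> {1..m} \<Longrightarrow> prv m (nxt m b) = b" unfolding prv_def nxt_def by auto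
lemma nxt_prv: "b \<in> {1..m} \<Longrightarrow> nxt m (prv m b) = b" unfolding prv_def nxt_def by auto
lemma nxt_ne: "2 \<le> m \<Longrightarrow> b \<in> {1..m} \<Longrightarrow> nxt m b \<noteq> b" unfolding nxt_def by auto

lemma sum_prv: "(\<Sum>j=1..m. f (prv m j)) = (\<Sum>j=1..m. (f j :: real))"
  by (rule sum.reindex_bij_witness[where i="nxt m" and j="prv m"])
     (auto simp: prv_def nxt_def)

lemma sum_endo:
  assumes "finite A" "\<And>x. x\<in>A \<Longrightarrow> g x \<in> A" "inj_on g A"
  shows "sum f A = sum (\<lambda>x. f (g x)) A"
proof -
  have "g ` A = A" using endo_inj_surj[OF assms(1) _ assms(3)] assms(2) by auto
  then have "sum f A = sum f (g ` A)" by simp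
  also have "\<dots> = sum (\<lambda>x. f (g x)) A" by (rule sum.reindex[OF assms(3), unfolded comp_def])
  finally show ?thesis .
qed

lemma irot_rot: "v \<in> Bn (2*m) \<Longrightarrow> irot m (rot m v) = v"
proof
  fix j assume v: "v \<in> Bn (2*m)"
  show "irot m (rot m v) j = v j"
  proof (cases "1 \<le> j \<and> j \<le> m")
    case True
    then show ?thesis using nxt_in[of j m] prv_nxt[of j m] by (auto simp: irot_def rot_def)
  next
    case F1: False
    show ?thesis
    proof (cases "m < j \<and> j \<le> 2*m")
      case True
      then have "j - m \<in> {1..m}" by auto
      then show ?thesis using True F1 nxt_in[of "j-m" m] prv_nxt[of "j-m" m] by (auto simp: irot_def rot_def)
    next
      case False
      then show ?thesis using F1 Bn_out[OF v, of j] by (auto simp: irot_def)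
    qed
  qed
qed

lemma tau_tau: "v \<in> Bn (2*m) \<Longrightarrow> tau m (tau m v) = v"
proof
  fix j assume v: "v \<in> Bn (2*m)"
  show "tau m (tau m v) j = v j"
    using Bn_out[OF v, of j] by (auto simp: tau_def)
qed

lemma rot_Bn: assumes v: "v \<in> Bn (2*m)" shows "rot m v \<in> Bn (2*m)"
proof -
  have "(\<Sum>j=1..2*m. rot m v j) = (\<Sum>j=1..m. rot m v j) + (\<Sum>j=1..m. rot m v (j+m))"
    by (rule sum_double)
  also have "(\<Sum>j=1..m. rot m v j) = (\<Sum>j=1..m. v (prv m j))"
    by (rule sum.cong) (auto simp: rot_def)
  also have "(\<Sum>j=1..m. rot m v (j+m)) = (\<Sum>j=1..m. v (prv m j + m))"
    by (rule sum.cong) (auto simp: rot_def)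
  also have "(\<Sum>j=1..m. v (prv m j)) + (\<Sum>j=1..m. v (prv m j + m)) = (\<Sum>j=1..m. v j) + (\<Sum>j=1..m. v (j+m))"
    using sum_prv[of v m] sum_prv[of "\<lambda>j. v (j+m)" m] by simp
  also have "\<dots> = (\<Sum>j=1..2*m. v j)" by (rule sum_double[symmetric])
  finally have s: "(\<Sum>j=1..2*m. rot m v j) = 0" using Bn_sum[OF v] by simp
  have vals: "\<forall>i\<in>{1..2*m}. rot m v i = 1 \<or> rot m v i = -1"
  proof
    fix i assume i: "i \<in> {1..2*m}"
    show "rot m v i = 1 \<or> rot m v i = -1"
    proof (cases "i \<le> m")
      case True
      then have "prv m i \<in> {1..2*m}" using prv_in[of i m] i by auto
      then show ?thesis using True i Bn_val[OF v] by (auto simp: rot_def)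
    next
      case False
      then have "i - m \<in> {1..m}" using i by auto
      then have "prv m (i - m) + m \<in> {1..2*m}" using prv_in[of "i-m" m] by auto
      then show ?thesis using False i Bn_val[OF v] by (auto simp: rot_def)
    qed
  qed
  have "\<forall>i. i \<notin> {1..2*m} \<longrightarrow> rot m v i = 0" by (auto simp: rot_def)
  with s vals show ?thesis unfolding Bn_def by auto
qed

lemma tau_Bn: assumes v: "v \<in> Bn (2*m)" shows "tau m v \<in> Bn (2*m)"
proof -
  have "(\<Sum>j=1..2*m. tau m v j) = (\<Sum>j=1..m. tau m v j) + (\<Sum>j=1..m. tau m v (j+m))"
    by (rule sum_double)
  also have "(\<Sum>j=1..m. tau m v j) = (\<Sum>j=1..m. v (j+m))"
    by (rule sum.cong) (auto simp: tau_def)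
  also have "(\<Sum>j=1..m. tau m v (j+m)) = (\<Sum>j=1..m. v j)"
    by (rule sum.cong) (auto simp: tau_def)
  also have "(\<Sum>j=1..m. v (j+m)) + (\<Sum>j=1..m. v j) = (\<Sum>j=1..2*m. v j)"
    using sum_double[of v m] by simp
  finally have s: "(\<Sum>j=1..2*m. tau m v j) = 0" using Bn_sum[OF v] by simp
  have vals: "\<forall>i\<in>{1..2*m}. tau m v i = 1 \<or> tau m v i = -1"
  proof
    fix i assume i: "i \<in> {1..2*m}"
    show "tau m v i = 1 \<or> tau m v i = -1"
    proof (cases "i \<le> m")
      case True
      then have "i + m \<in> {1..2*m}" using i by auto
      then show ?thesis using True i Bn_val[OF v] by (auto simp: tau_def)
    next
      case False
      then have "i - m \<in> {1..2*m}" using i by auto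
      then show ?thesis using False i Bn_val[OF v] by (auto simp: tau_def)
    qed
  qed
  have "\<forall>i. i \<notin> {1..2*m} \<longrightarrow> tau m v i = 0" by (auto simp: tau_def)
  with s vals show ?thesis unfolding Bn_def by auto
qed

lemma mixed_rot: "mixed m (rot m v) = {b\<in>{1..m}. prv m b \<in> mixed m v}"
proof -
  have "b \<in> {1..m} \<Longrightarrow> rot m v b = v (prv m b) \<and> rot m v (b + m) = v (prv m b + m)" for b
    by (auto simp: rot_def)
  then show ?thesis unfolding mixed_def using prv_in by auto
qed

lemma mixed_tau: "mixed m (tau m v) = mixed m v"
  unfolding mixed_def tau_def by auto

lemma mixed_rot1: assumes "mixed m v = {a}" shows "mixed m (rot m v) = {nxt m a}"
proof -
  have a: "a \<in> {1..m}" using assms mixed_sub[of m v] by auto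
  show ?thesis unfolding mixed_rot assms using a nxt_in[OF a] prv_nxt[OF a] nxt_prv by force
qed

lemma sig1: "mixed m v = {a} \<Longrightarrow> sig m s v = v (nxt m a)"
  unfolding sig_def by simp

lemma R1_zero:
  assumes m3: "3 \<le> m"
  shows "(\<Sum>v\<in>{v\<in>Bn (2*m). card (mixed m v) = 1}. sig m s v * v i) = 0"
proof -
  let ?R = "{v\<in>Bn (2*m). card (mixed m v) = 1}"
  define T where "T i = (\<Sum>v\<in>?R. sig m s v * v i)" for i
  have fR: "finite ?R" using finite_Bn by auto
  have R1: "\<exists>a. mixed m v = {a} \<and> a \<in> {1..m}" if "v \<in> ?R" for v
    using that mixed_sub[of m v] by (auto simp: card_Suc_eq)
  have rotR: "rot m v \<in> ?R" if "v \<in> ?R" for v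
    using that rot_Bn R1[OF that] mixed_rot1 by fastforce
  have rotinj: "inj_on (rot m) ?R"
    by (rule inj_on_inverseI[where g="irot m"]) (auto simp: irot_rot)
  have sigrot: "sig m s (rot m v) = sig m s v" if vR: "v \<in> ?R" for v
  proof -
    obtain a where a: "mixed m v = {a}" "a \<in> {1..m}" using R1[OF vR] by auto
    have "sig m s (rot m v) = rot m v (nxt m (nxt m a))" using sig1 mixed_rot1[OF a(1)] by simp
    also have "\<dots> = v (nxt m a)" using nxt_in[OF nxt_in[OF a(2)]] prv_nxt[OF nxt_in[OF a(2)]]
      by (auto simp: rot_def)
    also have "\<dots> = sig m s v" using sig1[OF a(1)] by simp
    finally show ?thesis .
  qed
  have tauR: "tau m v \<in> ?R" if "v \<in> ?R" for v
    using that tau_Bn mixed_tau by auto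
  have tauinj: "inj_on (tau m) ?R"
    by (rule inj_on_inverseI[where g="tau m"]) (auto simp: tau_tau)
  have sigtau: "sig m s (tau m v) = sig m s v" if vR: "v \<in> ?R" for v
  proof -
    obtain a where a: "mixed m v = {a}" "a \<in> {1..m}" using R1[OF vR] by auto
    have na: "nxt m a \<in> {1..m}" "nxt m a \<notin> mixed m v" using nxt_in[OF a(2)] nxt_ne[of m a] a m3 by auto
    have "sig m s (tau m v) = tau m v (nxt m a)" using sig1 mixed_tau a(1) by metis
    also have "\<dots> = v (nxt m a + m)" using na by (auto simp: tau_def)
    also have "\<dots> = v (nxt m a)" using pure_val[OF na] .
    also have "\<dots> = sig m s v" using sig1[OF a(1)] by simp
    finally show ?thesis .
  qed
  have Tstep: "T (Suc i) = T i" if "1 \<le> i" "i < m" for i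
  proof -
    have "T (Suc i) = (\<Sum>v\<in>?R. sig m s (rot m v) * rot m v (Suc i))"
      unfolding T_def by (rule sum_endo[OF fR rotR rotinj])
    also have "\<dots> = T i" unfolding T_def
    proof (rule sum.cong)
      fix x assume x: "x \<in> ?R"
      have "rot m x (Suc i) = x i" using that by (auto simp: rot_def prv_def)
      then show "sig m s (rot m x) * rot m x (Suc i) = sig m s x * x i" using sigrot[OF x] by simp
    qed simp
    finally show ?thesis .
  qed
  have Thi: "T (j + m) = T j" if "j \<in> {1..m}" for j
  proof -
    have "T (j + m) = (\<Sum>v\<in>?R. sig m s (tau m v) * tau m v (j + m))"
      unfolding T_def by (rule sum_endo[OF fR tauR tauinj])
    also have "\<dots> = T j" unfolding T_def
    proof (rule sum.cong)
      fix x assume x: "x \<in> ?R"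
      have "tau m x (j + m) = x j" using that by (auto simp: tau_def)
      then show "sig m s (tau m x) * tau m x (j + m) = sig m s x * x j" using sigtau[OF x] by simp
    qed simp
    finally show ?thesis .
  qed
  have Tlo: "T i = T 1" if "i \<in> {1..m}" for i
    using that
  proof (induction i)
    case 0 then show ?case by simp
  next
    case (Suc i)
    show ?case
    proof (cases "i = 0")
      case True then show ?thesis by simp
    next
      case False
      then have "T (Suc i) = T i" using Suc.prems by (intro Tstep) auto
      also have "T i = T 1" using Suc.IH Suc.prems False by auto
      finally show ?thesis .
    qed
  qed
  have "(\<Sum>i=1..2*m. T i) = (\<Sum>v\<in>?R. sig m s v * (\<Sum>i=1..2*m. v i))"
    unfolding T_def sum_distrib_left by (rule sum.swap)
  also have "\<dots> = 0" using Bn_sum by simp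
  finally have z: "(\<Sum>i=1..2*m. T i) = 0" .
  have "(\<Sum>i=1..2*m. T i) = (\<Sum>i=1..m. T i) + (\<Sum>i=1..m. T (i + m))" by (rule sum_double)
  also have "\<dots> = (\<Sum>i=1..m. T 1) + (\<Sum>i=1..m. T 1)"
  proof -
    have "(\<Sum>i=1..m. T i) = (\<Sum>i=1..m. T 1)" by (rule sum.cong[OF refl Tlo])
    moreover have "(\<Sum>i=1..m. T (i + m)) = (\<Sum>i=1..m. T 1)"
      by (rule sum.cong[OF refl]) (simp only: Thi Tlo)
    ultimately show ?thesis by simp
  qed
  finally have "2 * real m * T 1 = 0" using z by simp
  then have T1: "T 1 = 0" using m3 by simp
  show ?thesis
  proof (cases "i \<in> {1..2*m}")
    case False
    then show ?thesis by (intro sum.neutral) (auto simp: Bn_out)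
  next
    case True
    then have "T i = 0"
    proof (cases "i \<le> m")
      case True then show ?thesis using Tlo T1 \<open>i \<in> {1..2*m}\<close> by auto
    next
      case False
      then have "i - m \<in> {1..m}" "i = (i - m) + m" using \<open>i \<in> {1..2*m}\<close> by auto
      then show ?thesis using Thi Tlo T1 by metis
    qed
    then show ?thesis unfolding T_def .
  qed
qed



lemma sum_split_pred: assumes "finite A" shows "sum f A = sum f {x\<in>A. P x} + sum f {x\<in>A. \<not> P x}"
proof -
  have e: "A = {x\<in>A. P x} \<union> {x\<in>A. \<not> P x}" by auto
  show ?thesis by (subst e, rule sum.union_disjoint) (use assms in auto)
qed

lemma up_Bn:
  assumes v: "v \<in> Bn (2*m)" and mx: "mixed m v = {}"
  shows "up m v \<in> Bn m" "dbl m (up m v) = v"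
proof -
  have pv: "v (i + m) = v i" if "i \<in> {1..m}" for i using pure_val[OF that] mx by auto
  have "0 = (\<Sum>i=1..2*m. v i)" using Bn_sum[OF v] by simp
  also have "\<dots> = (\<Sum>i=1..m. v i) + (\<Sum>i=1..m. v (i+m))" by (rule sum_double)
  also have "(\<Sum>i=1..m. v (i+m)) = (\<Sum>i=1..m. v i)" by (rule sum.cong[OF refl]) (simp add: pv)
  finally have s0: "(\<Sum>i=1..m. v i) = 0" by simp
  have "(\<Sum>i=1..m. up m v i) = 0" using s0 by (simp add: up_def)
  moreover have "\<forall>i\<in>{1..m}. up m v i = 1 \<or> up m v i = -1"
    using Bn_lo[OF v] by (auto simp: up_def)
  moreover have "\<forall>i. i \<notin> {1..m} \<longrightarrow> up m v i = 0"
    using Bn_out[OF v, of 0] by (auto simp: up_def Suc_le_eq)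
  ultimately show "up m v \<in> Bn m" unfolding Bn_def by auto
  show "dbl m (up m v) = v"
  proof
    fix j show "dbl m (up m v) j = v j"
    proof (cases "j \<le> m")
      case True then show ?thesis by (simp add: dbl_def up_def)
    next
      case False
      show ?thesis
      proof (cases "j \<le> 2*m")
        case True
        then have "j - m \<in> {1..m}" using False by auto
        then have "v (j - m) = v j" using pv[of "j-m"] False by simp
        moreover have "j - m \<le> m" using True by simp
        ultimately show ?thesis using True False by (simp add: dbl_def up_def)
      next
        case F2: False
        then show ?thesis using False Bn_out[OF v, of j] by (simp add: dbl_def)
      qed
    qed
  qed
qed

lemma dbl_Bn:
  assumes y: "y \<in> Bn m"
  shows "dbl m y \<in> Bn (2*m)" "mixed m (dbl m y) = {}" "up m (dbl m y) = y"
proof -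
  have "(\<Sum>i=1..2*m. dbl m y i) = (\<Sum>i=1..m. dbl m y i) + (\<Sum>i=1..m. dbl m y (i+m))" by (rule sum_double)
  also have "\<dots> = (\<Sum>i=1..m. y i) + (\<Sum>i=1..m. y i)"
    by (auto simp: dbl_def intro!: arg_cong2[where f="(+)"] sum.cong)
  finally have "(\<Sum>i=1..2*m. dbl m y i) = 0" using Bn_sum[OF y] by simp
  moreover have "\<forall>i\<in>{1..2*m}. dbl m y i = 1 \<or> dbl m y i = -1"
  proof
    fix i assume i: "i \<in> {1..2*m}"
    show "dbl m y i = 1 \<or> dbl m y i = -1"
    proof (cases "i \<le> m")
      case True then show ?thesis using i Bn_val[OF y, of i] by (simp add: dbl_def)
    next
      case False then have "i - m \<in> {1..m}" using i by auto
      then show ?thesis using i False Bn_val[OF y, of "i-m"] by (simp add: dbl_def)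
    qed
  qed
  moreover have "\<forall>i. i \<notin> {1..2*m} \<longrightarrow> dbl m y i = 0"
    using Bn_out[OF y, of 0] by (auto simp: dbl_def Suc_le_eq)
  ultimately show "dbl m y \<in> Bn (2*m)" unfolding Bn_def by auto
  show "mixed m (dbl m y) = {}" unfolding mixed_def dbl_def by auto
  show "up m (dbl m y) = y" unfolding up_def dbl_def using Bn_out[OF y] by auto
qed

lemma sig_props:
  assumes m3: "3 \<le> m" and v: "v \<in> Bn (2*m)" and s: "\<forall>y\<in>Bn m. (s y = 1 \<or> s y = -1) \<and> s (neg y) = - s y"
  shows "(sig m s v = 1 \<or> sig m s v = -1) \<and> sig m s (neg v) = - sig m s v"
proof -
  let ?M = "mixed m v"
  have pm: "\<And>x. x \<in> {1..m} \<Longrightarrow> v x = 1 \<or> v x = -1" using Bn_lo[OF v] by auto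
  consider (a) "2 \<le> card ?M" | (b) "card ?M = 1" | (c) "card ?M = 0" by linarith
  then show ?thesis
  proof cases
    case a
    note fp = fb_props[OF a mixed_sub m3]
    have "fb1 ?M \<in> {1..m}" "fb2 ?M \<in> {1..m}" "fj m ?M \<in> {1..m}"
      using fp mixed_sub[of m v] by blast+
    then show ?thesis using a pm[of "fb1 ?M"] pm[of "fb2 ?M"] pm[of "fj m ?M"]
      unfolding sig_def mixed_neg by (auto simp: neg_def)
  next
    case b
    then obtain a where a: "?M = {a}" by (auto simp: card_Suc_eq)
    then have "a \<in> {1..m}" using mixed_sub[of m v] by auto
    then have "nxt m a \<in> {1..m}" by (rule nxt_in)
    then show ?thesis using pm[of "nxt m a"] a unfolding sig_def mixed_neg by (auto simp: neg_def)
  next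
    case c
    then have e: "?M = {}" by simp
    have u: "up m v \<in> Bn m" using up_Bn[OF v e] by simp
    have "up m (neg v) = neg (up m v)" by (auto simp: up_def neg_def)
    then show ?thesis using s u c unfolding sig_def mixed_neg by auto
  qed
qed



lemma good_double:
  assumes m3: "3 \<le> m" and g: "good m S"
  shows "good (2*m) (dbl m S)"
proof -
  obtain s where s1: "\<forall>y\<in>Bn m. (s y = 1 \<or> s y = -1) \<and> s (neg y) = - s y"
    and s2: "\<And>i. (\<Sum>y\<in>Bn m. s y * y i) = S i"
    using g unfolding good_def by blast
  have sums: "(\<Sum>v\<in>Bn (2*m). sig m s v * v i) = dbl m S i" for i
  proof -
    let ?B = "Bn (2*m)"
    let ?f = "\<lambda>v. sig m s v * v i"
    have "sum ?f ?B = sum ?f {v\<in>?B. 2 \<le> card (mixed m v)} + sum ?f {v\<in>?B. \<not> 2 \<le> card (mixed m v)}"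
      by (rule sum_split_pred[OF finite_Bn])
    also have "sum ?f {v\<in>?B. 2 \<le> card (mixed m v)} = 0" by (rule R2_zero[OF m3])
    also have "sum ?f {v\<in>?B. \<not> 2 \<le> card (mixed m v)} =
        sum ?f {v\<in>{v\<in>?B. \<not> 2 \<le> card (mixed m v)}. card (mixed m v) = 1}
      + sum ?f {v\<in>{v\<in>?B. \<not> 2 \<le> card (mixed m v)}. \<not> card (mixed m v) = 1}"
      by (rule sum_split_pred) (simp add: finite_Bn)
    also have "{v\<in>{v\<in>?B. \<not> 2 \<le> card (mixed m v)}. card (mixed m v) = 1} = {v\<in>?B. card (mixed m v) = 1}"
      by auto
    also have "sum ?f {v\<in>?B. card (mixed m v) = 1} = 0" by (rule R1_zero[OF m3])
    also have "{v\<in>{v\<in>?B. \<not> 2 \<le> card (mixed m v)}. \<not> card (mixed m v) = 1} = {v\<in>?B. mixed m v = {}}"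
    proof -
      have e: "(\<not> 2 \<le> card (mixed m v) \<and> \<not> card (mixed m v) = 1) \<longleftrightarrow> mixed m v = {}" for v
      proof -
        have "(\<not> 2 \<le> card (mixed m v) \<and> \<not> card (mixed m v) = 1) \<longleftrightarrow> card (mixed m v) = 0" by arith
        then show ?thesis by simp
      qed
      show ?thesis using e by blast
    qed
    also have "sum ?f {v\<in>?B. mixed m v = {}} = (\<Sum>y\<in>Bn m. s y * dbl m y i)"
    proof (rule sum.reindex_bij_witness[where i="dbl m" and j="up m"])
      fix a assume a: "a \<in> {v\<in>?B. mixed m v = {}}"
      show "dbl m (up m a) = a" using up_Bn a by auto
      show "up m a \<in> Bn m" using up_Bn a by auto
      have "sig m s a = s (up m a)" using a unfolding sig_def by auto
      then show "s (up m a) * dbl m (up m a) i = sig m s a * a i" using up_Bn a by auto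
    next
      fix b assume b: "b \<in> Bn m"
      show "up m (dbl m b) = b" using dbl_Bn[OF b] by auto
      show "dbl m b \<in> {v\<in>?B. mixed m v = {}}" using dbl_Bn[OF b] by auto
    qed
    also have "(\<Sum>y\<in>Bn m. s y * dbl m y i) = dbl m S i"
      unfolding s2[symmetric] dbl_def by auto
    finally show ?thesis by simp
  qed
  show ?thesis unfolding good_def
    by (intro exI[of _ "sig m s"] conjI ballI allI sig_props[OF m3 _ s1] sums)
qed

lemma dbl_zero: "dbl m (\<lambda>_. 0) = (\<lambda>_. 0)" by (auto simp: dbl_def)

lemma part1: "even n \<Longrightarrow> n > 0 \<Longrightarrow> \<not> (\<exists>k. n = 2 ^ k) \<Longrightarrow> good n (\<lambda>_. 0)"
proof (induction n rule: less_induct)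
  case (less n)
  obtain m where n: "n = 2 * m" using less.prems(1) by auto
  have m0: "m > 0" using less.prems(2) n by auto
  show ?case
  proof (cases "even m")
    case False
    have "m \<noteq> 1"
    proof
      assume "m = 1" then have "n = 2 ^ 1" using n by simp
      then show False using less.prems(3) by blast
    qed
    then have m3: "3 \<le> m" using False m0 by presburger
    show ?thesis using good_double[OF m3 good_odd[OF False]] n dbl_zero by simp
  next
    case True
    have np: "\<not> (\<exists>k. m = 2 ^ k)"
    proof
      assume "\<exists>k. m = 2 ^ k"
      then obtain k where "m = 2 ^ k" by auto
      then have "n = 2 ^ Suc k" using n by simp
      then show False using less.prems(3) by blast
    qed
    have "m \<noteq> 2"
    proof
      assume "m = 2" then have "m = 2 ^ 1" by simp
      then show False using np by blast
    qed
    then have m3: "3 \<le> m" using True m0 by presburger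
    have "good m (\<lambda>_. 0)" using less.IH[of m] True m0 np n by simp
    then have "good (2*m) (dbl m (\<lambda>_. 0))" by (rule good_double[OF m3])
    then show ?thesis by (simp only: n dbl_zero)
  qed
qed

lemma part2: "2 \<le> k \<Longrightarrow> good (2 ^ k) (\<lambda>i. -2 * wvec (2 ^ k) i)"
proof (induction k rule: dec_induct)
  case base
  then show ?case using good4 by simp
next
  case (step k)
  let ?m = "2 ^ k :: nat"
  have "(2::nat) ^ 2 \<le> 2 ^ k" by (rule power_increasing) (use step.hyps(1) in auto)
  then have m4: "4 \<le> ?m" by simp
  have "(2::nat) ^ 2 dvd 2 ^ k" by (rule le_imp_power_dvd) (use step.hyps(1) in auto)
  then have dvd4: "4 dvd ?m" by simp
  then obtain q where q: "?m = 4 * q" by blast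
  have "good (2 * ?m) (dbl ?m (\<lambda>i. -2 * wvec ?m i))"
    using good_double[OF _ step.IH] m4 by simp
  moreover have "dbl ?m (\<lambda>i. -2 * wvec ?m i) = (\<lambda>i. -2 * wvec (2 * ?m) i)"
  proof
    fix i
    show "dbl ?m (\<lambda>i. -2 * wvec ?m i) i = -2 * wvec (2 * ?m) i"
    proof (cases "i \<le> ?m")
      case True then show ?thesis by (simp add: dbl_def wvec_def)
    next
      case False
      have "i = (i - ?m) + 4 * q" using False q by simp
      then have "i mod 4 = ((i - ?m) + 4 * q) mod 4" by simp
      then have "(i - ?m) mod 4 = i mod 4" by simp
      have "1 \<le> i - ?m" using False by simp
      moreover have "i - ?m \<le> ?m \<longleftrightarrow> i \<le> 2 * ?m" using False by auto
      ultimately show ?thesis using False \<open>(i - ?m) mod 4 = i mod 4\<close> by (simp add: dbl_def wvec_def)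
    qed
  qed
  ultimately show ?case by simp
qed


theorem lemma4p3:
  fixes n :: nat
  assumes "even n" and "n > 0"
  shows "(\<not> (\<exists>k. n = 2 ^ k) \<longrightarrow> gV0 n \<in> PV0 n)
       \<and> ((\<exists>k. n = 2 ^ k) \<and> n > 2 \<longrightarrow> (\<lambda>i. gV0 n i - (1/2) * wvec n i) \<in> PV0 n)"
proof (intro conjI impI)
  assume h: "\<not> (\<exists>k. n = 2 ^ k)"
  have "(\<lambda>i. gV0 n i + 0 / 4) \<in> PV0 n"
    using good_PV0[OF part1[OF assms h] assms(2)] by simp
  then show "gV0 n \<in> PV0 n" by simp
next
  assume h: "(\<exists>k. n = 2 ^ k) \<and> n > 2"
  then obtain k where k: "n = 2 ^ k" by auto
  have "k \<noteq> 0"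
  proof assume "k = 0" then show False using h k by simp qed
  moreover have "k \<noteq> 1"
  proof assume "k = 1" then show False using h k by simp qed
  ultimately have "2 \<le> k" by arith
  then have "good n (\<lambda>i. -2 * wvec n i)" using part2 k by simp
  then have "(\<lambda>i. gV0 n i + (-2 * wvec n i) / 4) \<in> PV0 n"
    by (rule good_PV0) (use assms in simp)
  moreover have "(\<lambda>i. gV0 n i + (-2 * wvec n i) / 4) = (\<lambda>i. gV0 n i - (1/2) * wvec n i)"
    by auto
  ultimately show "(\<lambda>i. gV0 n i - (1/2) * wvec n i) \<in> PV0 n" by simp
qed

end
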